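(* Let $f$ be a piecewise contracting interval map satisfying the separation property, let $x\in\widetilde X$ and let $\theta$ be its itinerary. Then \[ \#\Delta^n_{lr}(x)\leqslant p(\theta,n+1)-p(\theta,n)\leqslant\#\Delta\qquad\forall\, n\geqslant 1. \] Moreover, if $n_0\geqslant 1$ is the smallest integer such that $\#(A\cap\Delta)\leqslant 1$ for every $A\in\mathcal{A}_n(x)$ and every $n\geqslant n_0$, then \[ p(\theta,n+1)=p(\theta,n)+\#\Delta^n_{lr}(x)\qquad\forall\, n\geqslant n_0. \]
   Context: Let $X$ be a compact interval of $\mathbb{R}$ and $X_1<\dots<X_N$ ($N\geqslant 2$) non-empty pairwise disjoint intervals, open in $X$, with $X=\bigcup_i\overline{X_i}$; $\Delta:=\{x\in\overline{X_i}\cap\overline{X_j}:i\neq j\}=\{c_1,\dots,c_{N-1}\}$ with $\{c_i\}=\overline{X_i}\cap\overline{X_{i+1}}$. A piecewise contracting interval map is $f:X\to X$, discontinuous at each point of $\Delta$, with $\lambda\in(0,1)$ such that $|f(x)-f(y)|\leqslant\lambda|x-y|$ for $x,y$ in the same $X_i$; $f_i$ is the continuous extension of $f|_{X_i}$ to $\overline{X_i}$. Separation property: each $f_i$ injective and $f_i(\overline{X_i})\cap f_j(\overline{X_j})=\emptyset$ for $i\neq j$. $\widetilde X:=\bigcap_{n\geqslant0}f^{-n}(X\setminus\Delta)$; the itinerary of $x\in\widetilde X$ is $\theta$ with $\theta_t=i$ iff $f^t(x)\in X_i$; $p(\theta,n):=\#\{\theta_t\dots\theta_{t+n-1}:t\geqslant0\}$.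 Atoms: $F_i(A):=\overline{f(A\cap X_i)}$, $A_{i_1\dots i_n}:=F_{i_n}\circ\dots\circ F_{i_1}(X)$ is an atom of generation $n$ if non-empty; $\mathcal{A}_n$ is the set of these and $\mathcal{A}_n(x):=\{A\in\mathcal{A}_n:\exists t\in\mathbb{N},\ f^{t+n}(x)\in A\}$. $c_i\in\Delta$ is $n$-left-right visited by the orbit of $x$ if there is $A\in\mathcal{A}_n(x)$ with $c_i\in A$, $f^{t+n}(x)\in A\cap X_i$ and $f^{t'+n}(x)\in A\cap X_{i+1}$ for some $t,t'\in\mathbb{N}$; $\Delta^n_{lr}(x)$ is the set of such discontinuities. *)

theory Defs
  imports "HOL-Analysis.Analysis"
begin

text \<open>The partition is given by points c 0 < c 1 < ... < c N of the real line;
  X = [c 0, c N], Delta = {c 1, ..., c (N-1)}, X_1 = [c 0, c 1), X_N = (c (N-1), c N],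
  and X_i = (c (i-1), c i) otherwise (indices i in {1..N}).\<close>

definition Xall :: "(nat \<Rightarrow> real) \<Rightarrow> nat \<Rightarrow> real set" where
  "Xall c N = {c 0 .. c N}"

definition Xpart :: "(nat \<Rightarrow> real) \<Rightarrow> nat \<Rightarrow> nat \<Rightarrow> real set" where
  "Xpart c N i = {x. (c (i - 1) < x \<or> (i = 1 \<and> x = c 0)) \<and> (x < c i \<or> (i = N \<and> x = c N))}"

definition Disc :: "(nat \<Rightarrow> real) \<Rightarrow> nat \<Rightarrow> real set" where
  "Disc c N = c ` {1 .. N - 1}"

definition pc_map :: "(nat \<Rightarrow> real) \<Rightarrow> nat \<Rightarrow> real \<Rightarrow> (real \<Rightarrow> real) \<Rightarrow> bool" where
  "pc_map c N lam f \<longleftrightarrow>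
     N \<ge> 2 \<and> (\<forall>i < N. c i < c (Suc i)) \<and>
     f ` Xall c N \<subseteq> Xall c N \<and>
     (\<forall>i \<in> {1 .. N - 1}. \<not> continuous (at (c i) within Xall c N) f) \<and>
     0 < lam \<and> lam < 1 \<and>
     (\<forall>i \<in> {1 .. N}. \<forall>x \<in> Xpart c N i. \<forall>y \<in> Xpart c N i. \<bar>f x - f y\<bar> \<le> lam * \<bar>x - y\<bar>)"

definition fext :: "(nat \<Rightarrow> real) \<Rightarrow> nat \<Rightarrow> (real \<Rightarrow> real) \<Rightarrow> nat \<Rightarrow> real \<Rightarrow> real" where
  "fext c N f i y = (if y \<in> Xpart c N i then f y else Lim (at y within Xpart c N i) f)"

definition separation :: "(nat \<Rightarrow> real) \<Rightarrow> nat \<Rightarrow> (real \<Rightarrow> real) \<Rightarrow> bool" where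
  "separation c N f \<longleftrightarrow>
     (\<forall>i \<in> {1 .. N}. inj_on (fext c N f i) (closure (Xpart c N i))) \<and>
     (\<forall>i \<in> {1 .. N}. \<forall>j \<in> {1 .. N}. i \<noteq> j \<longrightarrow>
        fext c N f i ` closure (Xpart c N i) \<inter> fext c N f j ` closure (Xpart c N j) = {})"

definition Xtilde :: "(nat \<Rightarrow> real) \<Rightarrow> nat \<Rightarrow> (real \<Rightarrow> real) \<Rightarrow> real set" where
  "Xtilde c N f = {x \<in> Xall c N. \<forall>n. (f ^^ n) x \<in> Xall c N - Disc c N}"

definition is_itinerary :: "(nat \<Rightarrow> real) \<Rightarrow> nat \<Rightarrow> (real \<Rightarrow> real) \<Rightarrow> real \<Rightarrow> (nat \<Rightarrow> nat) \<Rightarrow> bool" where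
  "is_itinerary c N f x \<theta> \<longleftrightarrow> (\<forall>t. \<theta> t \<in> {1 .. N} \<and> (f ^^ t) x \<in> Xpart c N (\<theta> t))"

definition pcompl :: "(nat \<Rightarrow> nat) \<Rightarrow> nat \<Rightarrow> nat" where
  "pcompl \<theta> n = card ((\<lambda>t. map \<theta> [t ..< t + n]) ` UNIV)"

definition Fop :: "(nat \<Rightarrow> real) \<Rightarrow> nat \<Rightarrow> (real \<Rightarrow> real) \<Rightarrow> nat \<Rightarrow> real set \<Rightarrow> real set" where
  "Fop c N f i A = closure (f ` (A \<inter> Xpart c N i))"

definition atom_of :: "(nat \<Rightarrow> real) \<Rightarrow> nat \<Rightarrow> (real \<Rightarrow> real) \<Rightarrow> nat list \<Rightarrow> real set" where
  "atom_of c N f w = foldl (\<lambda>A i. Fop c N f i A) (Xall c N) w"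

definition atoms :: "(nat \<Rightarrow> real) \<Rightarrow> nat \<Rightarrow> (real \<Rightarrow> real) \<Rightarrow> nat \<Rightarrow> real set set" where
  "atoms c N f n = {atom_of c N f w | w. length w = n \<and> set w \<subseteq> {1 .. N} \<and> atom_of c N f w \<noteq> {}}"

definition atoms_x :: "(nat \<Rightarrow> real) \<Rightarrow> nat \<Rightarrow> (real \<Rightarrow> real) \<Rightarrow> nat \<Rightarrow> real \<Rightarrow> real set set" where
  "atoms_x c N f n x = {A \<in> atoms c N f n. \<exists>t. (f ^^ (t + n)) x \<in> A}"

definition Delta_lr :: "(nat \<Rightarrow> real) \<Rightarrow> nat \<Rightarrow> (real \<Rightarrow> real) \<Rightarrow> nat \<Rightarrow> real \<Rightarrow> real set" where
  "Delta_lr c N f n x = {c i | i. i \<in> {1 .. N - 1} \<and>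
      (\<exists>A \<in> atoms_x c N f n x. c i \<in> A \<and>
         (\<exists>t. (f ^^ (t + n)) x \<in> A \<inter> Xpart c N i) \<and>
         (\<exists>t'. (f ^^ (t' + n)) x \<in> A \<inter> Xpart c N (Suc i)))}"

end

theory Submission
  imports Defs
begin

locale pcm =
  fixes c :: "nat \<Rightarrow> real" and N :: nat and lam :: real and f :: "real \<Rightarrow> real"
  assumes pc: "pc_map c N lam f" and sep: "separation c N f"
begin

lemma N2: "N \<ge> 2" using pc by (simp add: pc_map_def)
lemma cstep: "i < N \<Longrightarrow> c i < c (Suc i)" using pc by (simp add: pc_map_def)

lemma cmono: "i < j \<Longrightarrow> j \<le> N \<Longrightarrow> c i < c j"
proof (induction j)
  case 0 then show ?case by simp
next
  case (Suc j)
  show ?case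
  proof (cases "i = j")
    case True then show ?thesis using Suc cstep by simp
  next
    case False then show ?thesis using Suc cstep[of j] by simp
  qed
qed

lemma cmono_le: "i \<le> j \<Longrightarrow> j \<le> N \<Longrightarrow> c i \<le> c j"
  using cmono[of i j] by (cases "i = j") auto

lemma Xpart_lt: "y \<in> Xpart c N i \<Longrightarrow> i < N \<Longrightarrow> y < c i"
  by (auto simp: Xpart_def)

lemma Xpart_gt: "y \<in> Xpart c N i \<Longrightarrow> i > 1 \<Longrightarrow> c (i - 1) < y"
  by (auto simp: Xpart_def)

lemma Xpart_disj:
  assumes "i \<in> {1..N}" "j \<in> {1..N}" "y \<in> Xpart c N i" "y \<in> Xpart c N j"
  shows "i = j"
proof (rule ccontr)
  assume ne: "i \<noteq> j"
  have "\<not> (i < j)" if "i < j" "y \<in> Xpart c N i" "y \<in> Xpart c N j" "i \<in> {1..N}" "j \<in> {1..N}" for i j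
  proof -
    have "y < c i" using Xpart_lt that by auto
    moreover have "c (j - 1) < y" using Xpart_gt that by auto
    moreover have "c i \<le> c (j - 1)" using cmono_le[of i "j - 1"] that by auto
    ultimately show ?thesis by simp
  qed
  then show False using ne assms by (metis linorder_neqE_nat)
qed

lemma Xpart_sub: "i \<in> {1..N} \<Longrightarrow> Xpart c N i \<subseteq> Xall c N"
proof
  fix y assume i: "i \<in> {1..N}" and y: "y \<in> Xpart c N i"
  have "c 0 \<le> c (i - 1)" "c i \<le> c N" using cmono_le i by auto
  then show "y \<in> Xall c N" using y by (auto simp: Xpart_def Xall_def)
qed

lemma Xpart_interval: "is_interval (Xpart c N i)"
  unfolding is_interval_1 Xpart_def by auto

lemma Xpart_bounded: "i \<in> {1..N} \<Longrightarrow> bounded (Xpart c N i)"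
  using Xpart_sub bounded_subset[of "Xall c N"] by (auto simp: Xall_def)

lemma uc: "i \<in> {1..N} \<Longrightarrow> uniformly_continuous_on (Xpart c N i) f"
  unfolding uniformly_continuous_on_def
proof (intro allI impI)
  fix e :: real assume i: "i \<in> {1..N}" and e: "e > 0"
  have L: "\<bar>f x - f y\<bar> \<le> lam * \<bar>x - y\<bar>" if "x \<in> Xpart c N i" "y \<in> Xpart c N i" for x y
    using pc i that by (auto simp: pc_map_def)
  have lam: "0 < lam" "lam < 1" using pc by (auto simp: pc_map_def)
  show "\<exists>d>0. \<forall>x\<in>Xpart c N i. \<forall>x'\<in>Xpart c N i. dist x' x < d \<longrightarrow> dist (f x') (f x) < e"
  proof (intro exI[of _ e] conjI ballI impI)
    fix x x' assume "x \<in> Xpart c N i" "x' \<in> Xpart c N i" "dist x' x < e"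
    then have "\<bar>f x' - f x\<bar> \<le> lam * \<bar>x' - x\<bar>" "\<bar>x' - x\<bar> < e" using L by (auto simp: dist_real_def)
    moreover have "lam * \<bar>x' - x\<bar> \<le> \<bar>x' - x\<bar>" using lam mult_right_le_one_le[of "\<bar>x' - x\<bar>" lam] by (simp add: mult.commute)
    ultimately show "dist (f x') (f x) < e" by (simp add: dist_real_def)
  qed (use e in auto)
qed

lemma fext_cont:
  assumes i: "i \<in> {1..N}"
  shows "continuous_on (closure (Xpart c N i)) (fext c N f i)"
proof -
  let ?X = "Xpart c N i"
  obtain g where g: "uniformly_continuous_on (closure ?X) g" "\<And>x. x \<in> ?X \<Longrightarrow> f x = g x"
    using uniformly_continuous_on_extension_on_closure[OF uc[OF i]] by metis
  have gc: "continuous_on (closure ?X) g" using g(1) uniformly_continuous_imp_continuous by blast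
  have "fext c N f i y = g y" if y: "y \<in> closure ?X" for y
  proof (cases "y \<in> ?X")
    case True then show ?thesis using g by (simp add: fext_def)
  next
    case False
    then have lp: "y islimpt ?X" using y by (simp add: closure_def)
    have "(g \<longlongrightarrow> g y) (at y within closure ?X)" using gc y continuous_on_def by blast
    then have "(g \<longlongrightarrow> g y) (at y within ?X)" by (rule tendsto_within_subset) (rule closure_subset)
    moreover have "eventually (\<lambda>z. g z = f z) (at y within ?X)"
      unfolding eventually_at_filter using g(2) by (auto intro!: always_eventually)
    ultimately have "(f \<longlongrightarrow> g y) (at y within ?X)" using tendsto_cong by blast
    then have "Lim (at y within ?X) f = g y"
      by (rule tendsto_Lim[rotated]) (simp add: trivial_limit_within lp)
    then show ?thesis using False by (simp add: fext_def)
  qed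
  then show ?thesis using continuous_on_cong[THEN iffD2, OF refl _ gc] by metis
qed

lemma closure_image:
  assumes i: "i \<in> {1..N}" and S: "S \<subseteq> Xpart c N i"
  shows "closure (f ` S) = fext c N f i ` closure S"
proof
  have cS: "closure S \<subseteq> closure (Xpart c N i)" using S closure_mono by blast
  have cont: "continuous_on (closure S) (fext c N f i)"
    using fext_cont[OF i] continuous_on_subset cS by blast
  have comp: "compact (closure S)"
    using Xpart_bounded[OF i] S bounded_subset compact_closure by blast
  have eq: "f ` S = fext c N f i ` S" using S by (auto simp: fext_def)
  show "closure (f ` S) \<subseteq> fext c N f i ` closure S"
    unfolding eq
    by (rule closure_minimal) (use closure_subset compact_continuous_image[OF cont comp] compact_imp_closed in auto)
  show "fext c N f i ` closure S \<subseteq> closure (f ` S)"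
    by (rule image_closure_subset[OF cont]) (auto simp: eq intro: closure_subset[THEN subsetD])
qed

end
context pcm
begin

lemma atom_snoc: "atom_of c N f (w @ [i]) = Fop c N f i (atom_of c N f w)"
  by (simp add: atom_of_def)

lemma atom_nil: "atom_of c N f [] = Xall c N"
  by (simp add: atom_of_def)

lemma atom_closed: "closed (atom_of c N f w)"
  by (cases w rule: rev_exhaust) (auto simp: atom_snoc atom_nil Fop_def Xall_def)

lemma atom_interval: "set w \<subseteq> {1..N} \<Longrightarrow> is_interval (atom_of c N f w)"
proof (induction w rule: rev_induct)
  case Nil then show ?case by (simp add: atom_nil Xall_def is_interval_cc)
next
  case (snoc i w)
  then have i: "i \<in> {1..N}" and A: "is_interval (atom_of c N f w)" by auto
  let ?S = "atom_of c N f w \<inter> Xpart c N i"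
  have "is_interval ?S" using A Xpart_interval is_interval_Int by blast
  moreover have "continuous_on ?S f"
    using uc[OF i] uniformly_continuous_imp_continuous continuous_on_subset by blast
  ultimately have "connected (f ` ?S)"
    using connected_continuous_image is_interval_connected_1 by blast
  then have "convex (f ` ?S)" using is_interval_connected_1 is_interval_convex_1 by blast
  then have "convex (closure (f ` ?S))" by (rule convex_closure)
  then show ?case by (simp add: atom_snoc Fop_def is_interval_convex_1)
qed

lemma Fop_sub:
  assumes i: "i \<in> {1..N}"
  shows "Fop c N f i A = fext c N f i ` closure (A \<inter> Xpart c N i)"
  unfolding Fop_def by (rule closure_image[OF i]) auto

lemma atom_disj:
  "length w = length w' \<Longrightarrow> set w \<subseteq> {1..N} \<Longrightarrow> set w' \<subseteq> {1..N} \<Longrightarrow> w \<noteq> w'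
   \<Longrightarrow> atom_of c N f w \<inter> atom_of c N f w' = {}"
proof (induction w arbitrary: w' rule: rev_induct)
  case Nil then show ?case by simp
next
  case (snoc i u)
  from snoc.prems(1) obtain u' j where w': "w' = u' @ [j]"
    by (cases w' rule: rev_exhaust) auto
  have i: "i \<in> {1..N}" and j: "j \<in> {1..N}" using snoc.prems w' by auto
  have len: "length u = length u'" using snoc.prems w' by simp
  have sub: "fext c N f k ` closure (A \<inter> Xpart c N k) \<subseteq> fext c N f k ` closure (Xpart c N k)" for k A
    by (intro image_mono closure_mono) auto
  show ?case
  proof (cases "i = j")
    case False
    have "fext c N f i ` closure (Xpart c N i) \<inter> fext c N f j ` closure (Xpart c N j) = {}"
      using sep i j False by (simp add: separation_def)
    then show ?thesis
      unfolding w' atom_snoc Fop_sub[OF i] Fop_sub[OF j] using sub[of i] sub[of j] by blast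
  next
    case True
    then have "u \<noteq> u'" using snoc.prems w' by auto
    then have dj: "atom_of c N f u \<inter> atom_of c N f u' = {}"
      using snoc.IH[of u'] len snoc.prems w' by auto
    have inj: "inj_on (fext c N f i) (closure (Xpart c N i))" using sep i by (simp add: separation_def)
    have c1: "closure (A \<inter> Xpart c N i) \<subseteq> A \<inter> closure (Xpart c N i)" if "closed A" for A
      using that by (meson closure_minimal closure_mono inf.cobounded1 inf.cobounded2 le_inf_iff)
    have "fext c N f i ` (closure (atom_of c N f u \<inter> Xpart c N i) \<inter> closure (atom_of c N f u' \<inter> Xpart c N i)) = {}"
      using c1[OF atom_closed[of u]] c1[OF atom_closed[of u']] dj by blast
    then show ?thesis
      unfolding w' atom_snoc Fop_sub[OF i] True[symmetric]
      using inj_on_image_Int[OF inj, of "closure (atom_of c N f u \<inter> Xpart c N i)" "closure (atom_of c N f u' \<inter> Xpart c N i)"]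
        c1[OF atom_closed[of u]] c1[OF atom_closed[of u']] by auto
  qed
qed

end
context pcm
begin

lemma orbit:
  assumes x: "x \<in> Xtilde c N f" and th: "is_itinerary c N f x \<theta>"
  shows "(f ^^ (t + n)) x \<in> atom_of c N f (map \<theta> [t..<t + n])"
proof (induction n)
  case 0 then show ?case using x by (simp add: atom_nil Xtilde_def)
next
  case (Suc n)
  have "(f ^^ (t + n)) x \<in> Xpart c N (\<theta> (t + n))" using th by (simp add: is_itinerary_def)
  then have "(f ^^ (t + Suc n)) x \<in> f ` (atom_of c N f (map \<theta> [t..<t + n]) \<inter> Xpart c N (\<theta> (t + n)))"
    using Suc by auto
  then show ?case by (simp add: atom_snoc Fop_def closure_subset[THEN subsetD])
qed

lemma cinj: "inj_on c {0..N}"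
  by (rule inj_onI) (metis atLeastAtMost_iff cmono linorder_neqE_nat order_less_irrefl)

lemma card_cimg: assumes "b \<le> N" shows "card (c ` {a..<b}) = b - a"
proof -
  have "{a..<b} \<subseteq> {0..N}" using assms by auto
  then show ?thesis using card_image[OF inj_on_subset[OF cinj, of "{a..<b}"]] by simp
qed

end

locale orb = pcm +
  fixes x :: real and \<theta> :: "nat \<Rightarrow> nat" and n :: nat
  assumes x: "x \<in> Xtilde c N f" and th: "is_itinerary c N f x \<theta>"
begin

definition L :: "nat list set" where "L = (\<lambda>t. map \<theta> [t..<t+n]) ` UNIV"
definition E :: "nat list \<Rightarrow> nat set" where "E w = {\<theta> (t + n) | t. map \<theta> [t..<t+n] = w}"

lemma th_range: "\<theta> t \<in> {1..N}" using th by (simp add: is_itinerary_def)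
lemma th_X: "(f ^^ t) x \<in> Xpart c N (\<theta> t)" using th by (simp add: is_itinerary_def)

lemma L_props: "w \<in> L \<Longrightarrow> length w = n \<and> set w \<subseteq> {1..N}"
  using th_range by (auto simp: L_def)

lemma finite_L: "finite L"
  by (rule finite_subset[OF _ finite_lists_length_eq[of "{1..N}" n]]) (use L_props in auto)

lemma E_props: "w \<in> L \<Longrightarrow> finite (E w) \<and> E w \<noteq> {} \<and> E w \<subseteq> {1..N}"
  using th_range by (auto simp: L_def E_def intro: finite_subset[of _ "{1..N}"])

lemma pn: "pcompl \<theta> n = card L" by (simp add: pcompl_def L_def)

lemma pSn: "pcompl \<theta> (n + 1) = (\<Sum>w\<in>L. card (E w))"
proof -
  have eq: "(\<lambda>t. map \<theta> [t..<t + (n+1)]) ` UNIV = (\<Union>w\<in>L. (\<lambda>i. w @ [i]) ` E w)"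
  proof
    show "(\<lambda>t. map \<theta> [t..<t + (n+1)]) ` UNIV \<subseteq> (\<Union>w\<in>L. (\<lambda>i. w @ [i]) ` E w)"
    proof
      fix z assume "z \<in> (\<lambda>t. map \<theta> [t..<t + (n+1)]) ` UNIV"
      then obtain t where z: "z = map \<theta> [t..<t+n] @ [\<theta> (t+n)]" by auto
      have "map \<theta> [t..<t+n] \<in> L" by (auto simp: L_def)
      moreover have "\<theta> (t+n) \<in> E (map \<theta> [t..<t+n])" by (auto simp: E_def)
      ultimately show "z \<in> (\<Union>w\<in>L. (\<lambda>i. w @ [i]) ` E w)" using z by blast
    qed
    show "(\<Union>w\<in>L. (\<lambda>i. w @ [i]) ` E w) \<subseteq> (\<lambda>t. map \<theta> [t..<t + (n+1)]) ` UNIV"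
    proof
      fix z assume "z \<in> (\<Union>w\<in>L. (\<lambda>i. w @ [i]) ` E w)"
      then obtain w i where "z = w @ [i]" "i \<in> E w" by auto
      then obtain s where "z = map \<theta> [s..<s+n] @ [\<theta> (s+n)]" by (auto simp: E_def)
      then have "z = map \<theta> [s..<s + (n+1)]" by simp
      then show "z \<in> (\<lambda>t. map \<theta> [t..<t + (n+1)]) ` UNIV" by blast
    qed
  qed
  have "card (\<Union>w\<in>L. (\<lambda>i. w @ [i]) ` E w) = (\<Sum>w\<in>L. card ((\<lambda>i. w @ [i]) ` E w))"
    by (rule card_UN_disjoint) (use finite_L E_props in auto)
  also have "\<dots> = (\<Sum>w\<in>L. card (E w))"
    by (rule sum.cong) (auto intro: card_image inj_onI)
  finally show ?thesis unfolding pcompl_def eq .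
qed

lemma occ_unique:
  assumes "(f ^^ (t + n)) x \<in> atom_of c N f u" "length u = n" "set u \<subseteq> {1..N}"
  shows "u = map \<theta> [t..<t+n]"
proof (rule ccontr)
  assume "u \<noteq> map \<theta> [t..<t+n]"
  moreover have "length (map \<theta> [t..<t+n]) = n" "set (map \<theta> [t..<t+n]) \<subseteq> {1..N}"
    using th_range by auto
  ultimately have "atom_of c N f u \<inter> atom_of c N f (map \<theta> [t..<t+n]) = {}"
    using atom_disj[of u "map \<theta> [t..<t+n]"] assms by auto
  moreover have "(f ^^ (t + n)) x \<in> atom_of c N f (map \<theta> [t..<t+n])" by (rule orbit[OF x th])
  ultimately show False using assms by blast
qed

lemma key:
  assumes w: "w \<in> L" and a: "a \<in> E w" and b: "b \<in> E w" and ab: "a < b"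
  shows "c ` {a..<b} \<subseteq> atom_of c N f w \<inter> Disc c N"
proof
  fix z assume "z \<in> c ` {a..<b}"
  then obtain k where k: "a \<le> k" "k < b" "z = c k" by auto
  obtain t where t: "map \<theta> [t..<t+n] = w" "a = \<theta> (t + n)" using a by (auto simp: E_def)
  obtain s where s: "map \<theta> [s..<s+n] = w" "b = \<theta> (s + n)" using b by (auto simp: E_def)
  have aN: "a \<in> {1..N}" "b \<in> {1..N}" using t s th_range by auto
  let ?p = "(f ^^ (t + n)) x" and ?q = "(f ^^ (s + n)) x"
  have p: "?p \<in> atom_of c N f w" "?p \<in> Xpart c N a" using orbit[OF x th] th_X t by auto
  have q: "?q \<in> atom_of c N f w" "?q \<in> Xpart c N b" using orbit[OF x th] th_X s by auto
  have "?p < c a" using Xpart_lt[OF p(2)] ab aN by auto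
  moreover have "c a \<le> c k" using cmono_le k aN by auto
  moreover have "c (b - 1) < ?q" using Xpart_gt[OF q(2)] ab aN by auto
  moreover have "c k \<le> c (b - 1)" using cmono_le k aN by auto
  ultimately have "c k \<in> atom_of c N f w"
    using atom_interval[OF conjunct2[OF L_props[OF w]]] p(1) q(1) unfolding is_interval_1
    by (meson less_imp_le order_trans)
  moreover have "c k \<in> Disc c N" using k aN by (auto simp: Disc_def)
  ultimately show "z \<in> atom_of c N f w \<inter> Disc c N" using k by auto
qed

lemma L_disj: "w \<in> L \<Longrightarrow> w' \<in> L \<Longrightarrow> w \<noteq> w' \<Longrightarrow> atom_of c N f w \<inter> atom_of c N f w' = {}"
  using atom_disj L_props by metis

lemma finD: "finite (Disc c N)" by (simp add: Disc_def)

lemma cardE: assumes w: "w \<in> L" shows "card (E w) \<le> card (atom_of c N f w \<inter> Disc c N) + 1"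
proof -
  have fE: "finite (E w)" "E w \<noteq> {}" "E w \<subseteq> {1..N}" using E_props[OF w] by auto
  let ?a = "Min (E w)" and ?b = "Max (E w)"
  have ab: "?a \<in> E w" "?b \<in> E w" using fE by auto
  have "E w \<subseteq> {?a..?b}" using fE by auto
  then have "card (E w) \<le> ?b + 1 - ?a" using card_mono[of "{?a..?b}"] by auto
  moreover have "?b - ?a \<le> card (atom_of c N f w \<inter> Disc c N)"
  proof (cases "?a < ?b")
    case True
    have "card (c ` {?a..<?b}) \<le> card (atom_of c N f w \<inter> Disc c N)"
      using key[OF w ab True] finD by (intro card_mono) auto
    moreover have "?b \<le> N" using ab fE by auto
    ultimately show ?thesis using card_cimg[of ?b ?a] by simp
  qed simp
  ultimately show ?thesis by linarith
qed

lemma atom_in_x: "w \<in> L \<Longrightarrow> atom_of c N f w \<in> atoms_x c N f n x"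
proof -
  assume "w \<in> L"
  then obtain t where t: "w = map \<theta> [t..<t+n]" by (auto simp: L_def)
  have o: "(f ^^ (t + n)) x \<in> atom_of c N f w" using orbit[OF x th] t by simp
  then show ?thesis using L_props[OF \<open>w \<in> L\<close>] by (auto simp: atoms_x_def atoms_def)
qed

lemma upper: "pcompl \<theta> (n + 1) \<le> pcompl \<theta> n + card (Disc c N)"
proof -
  let ?D = "\<lambda>w. atom_of c N f w \<inter> Disc c N"
  have "pcompl \<theta> (n + 1) \<le> (\<Sum>w\<in>L. card (?D w) + 1)"
    unfolding pSn by (rule sum_mono) (rule cardE)
  also have "\<dots> = (\<Sum>w\<in>L. card (?D w)) + (\<Sum>w\<in>L. 1)" by (rule sum.distrib)
  also have "(\<Sum>w\<in>L. 1) = card L" by simp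
  also have "(\<Sum>w\<in>L. card (?D w)) = card (\<Union>w\<in>L. ?D w)"
    by (rule card_UN_disjoint[symmetric]) (use finite_L finD L_disj in blast)+
  also have "\<dots> \<le> card (Disc c N)" by (rule card_mono[OF finD]) auto
  finally show ?thesis using pn by simp
qed

lemma sum_m1: "(\<Sum>w\<in>L. card (E w)) = (\<Sum>w\<in>L. card (E w) - 1) + card L"
proof -
  have "(\<Sum>w\<in>L. card (E w)) = (\<Sum>w\<in>L. (card (E w) - 1) + 1)"
    by (rule sum.cong) (use E_props in \<open>auto simp: card_gt_0_iff\<close>)
  also have "\<dots> = (\<Sum>w\<in>L. card (E w) - 1) + (\<Sum>w\<in>L. 1)" by (rule sum.distrib)
  finally show ?thesis by simp
qed

lemma lower: "card (Delta_lr c N f n x) \<le> (\<Sum>w\<in>L. card (E w) - 1)"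
proof -
  let ?P = "\<lambda>w. {k \<in> E w. Suc k \<in> E w}"
  have sub: "Delta_lr c N f n x \<subseteq> (\<Union>w\<in>L. c ` ?P w)"
  proof
    fix z assume "z \<in> Delta_lr c N f n x"
    then obtain i A t t' where i: "z = c i" "i \<in> {1..N-1}" and A: "A \<in> atoms_x c N f n x"
      and t: "(f ^^ (t + n)) x \<in> A \<inter> Xpart c N i" and t': "(f ^^ (t' + n)) x \<in> A \<inter> Xpart c N (Suc i)"
      unfolding Delta_lr_def by blast
    obtain u where u: "A = atom_of c N f u" "length u = n" "set u \<subseteq> {1..N}"
      using A by (auto simp: atoms_x_def atoms_def)
    have u1: "u = map \<theta> [t..<t+n]" and u2: "u = map \<theta> [t'..<t'+n]"
      using occ_unique u t t' by auto
    have e1: "\<theta> (t + n) = i" using Xpart_disj[OF th_range _ th_X] t i by auto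
    have e2: "\<theta> (t' + n) = Suc i" using Xpart_disj[OF th_range _ th_X] t' i by auto
    have "i \<in> E u" unfolding E_def using u1 e1 by blast
    moreover have "Suc i \<in> E u" unfolding E_def mem_Collect_eq using u2 e2 by metis
    ultimately have "i \<in> ?P u" by simp
    moreover have "u \<in> L" using u1 by (auto simp: L_def)
    ultimately show "z \<in> (\<Union>w\<in>L. c ` ?P w)" using i by auto
  qed
  have "card (Delta_lr c N f n x) \<le> card (\<Union>w\<in>L. c ` ?P w)"
    by (rule card_mono[OF _ sub]) (use finite_L E_props in auto)
  also have "\<dots> \<le> (\<Sum>w\<in>L. card (c ` ?P w))" by (rule card_UN_le[OF finite_L])
  also have "\<dots> \<le> (\<Sum>w\<in>L. card (E w) - 1)"
  proof (rule sum_mono)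
    fix w assume w: "w \<in> L"
    have fE: "finite (E w)" "E w \<noteq> {}" using E_props[OF w] by auto
    have "?P w \<subseteq> E w - {Max (E w)}" using fE by (auto dest: Max_ge[OF fE(1)])
    then have "card (?P w) \<le> card (E w) - 1"
      using card_mono[of "E w - {Max (E w)}" "?P w"] fE by auto
    then show "card (c ` ?P w) \<le> card (E w) - 1" using card_image_le[of "?P w" c] fE by auto
  qed
  finally show ?thesis .
qed

lemma eqpart:
  assumes hyp: "\<forall>A \<in> atoms_x c N f n x. card (A \<inter> Disc c N) \<le> 1"
  shows "pcompl \<theta> (n + 1) \<le> pcompl \<theta> n + card (Delta_lr c N f n x)"
proof -
  let ?W = "{w \<in> L. card (E w) = 2}"
  have le2: "card (E w) \<le> 2" if "w \<in> L" for w
    using cardE[OF that] hyp atom_in_x[OF that] by fastforce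
  have "(\<Sum>w\<in>L. card (E w) - 1) \<le> (\<Sum>w\<in>L. if card (E w) = 2 then 1 else 0)"
    by (rule sum_mono) (use le2 in fastforce)
  also have "\<dots> = card ?W" using sum.inter_filter[OF finite_L, of "\<lambda>_. 1::nat" "\<lambda>w. card (E w) = 2"] by simp
  also have "card ?W \<le> card (Delta_lr c N f n x)"
  proof (rule card_inj_on_le[of "\<lambda>w. c (Min (E w))"])
    show "finite (Delta_lr c N f n x)"
      by (rule finite_subset[OF _ finD]) (auto simp: Delta_lr_def Disc_def)
    have main: "c (Min (E w)) \<in> Delta_lr c N f n x \<and> c (Min (E w)) \<in> atom_of c N f w" if w: "w \<in> ?W" for w
    proof -
      have wL: "w \<in> L" using w by simp
      have fE: "finite (E w)" "E w \<noteq> {}" "E w \<subseteq> {1..N}" using E_props[OF wL] by auto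
      let ?a = "Min (E w)" and ?b = "Max (E w)"
      have ab: "?a \<in> E w" "?b \<in> E w" using fE by auto
      have "?a \<noteq> ?b"
      proof
        assume "?a = ?b"
        then have "E w \<subseteq> {?a}" using fE by (metis Max_ge Min_le antisym singletonI subsetI)
        then show False using w card_mono[of "{?a}" "E w"] by auto
      qed
      then have lt: "?a < ?b" using fE by (simp add: order_le_neq_trans)
      have kk: "c ` {?a..<?b} \<subseteq> atom_of c N f w \<inter> Disc c N" by (rule key[OF wL ab lt])
      have "card (c ` {?a..<?b}) \<le> 1"
        using card_mono[OF _ kk] finD hyp atom_in_x[OF wL] by (meson finite_Int order_trans)
      moreover have "?b \<le> N" using ab fE by auto
      ultimately have bS: "?b = Suc ?a" using card_cimg[of ?b ?a] lt by simp
      have ca: "c ?a \<in> atom_of c N f w" using kk lt by auto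
      obtain t where t: "map \<theta> [t..<t+n] = w" "?a = \<theta> (t + n)" using ab by (auto simp: E_def)
      obtain s where s: "map \<theta> [s..<s+n] = w" "?b = \<theta> (s + n)" using ab by (auto simp: E_def)
      have "(f ^^ (t + n)) x \<in> atom_of c N f w \<inter> Xpart c N ?a" using orbit[OF x th] th_X t by auto
      moreover have "(f ^^ (s + n)) x \<in> atom_of c N f w \<inter> Xpart c N (Suc ?a)" using orbit[OF x th] th_X s bS by auto
      moreover have "?a \<in> {1..N-1}" using bS ab fE by auto
      ultimately have "c ?a \<in> Delta_lr c N f n x"
        unfolding Delta_lr_def using atom_in_x[OF wL] ca by blast
      then show ?thesis using ca by simp
    qed
    show "(\<lambda>w. c (Min (E w))) ` ?W \<subseteq> Delta_lr c N f n x" using main by auto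
    show "inj_on (\<lambda>w. c (Min (E w))) ?W"
    proof (rule inj_onI)
      fix w w' assume w: "w \<in> ?W" and w': "w' \<in> ?W" and eq: "c (Min (E w)) = c (Min (E w'))"
      show "w = w'"
      proof (rule ccontr)
        assume "w \<noteq> w'"
        then have "atom_of c N f w \<inter> atom_of c N f w' = {}"
          using atom_disj L_props w w' by auto
        then show False using main[OF w] main[OF w'] eq by auto
      qed
    qed
  qed
  finally show ?thesis using pSn pn sum_m1 by simp
qed

end
lemma orb_facts:
  assumes "pc_map c N lam f" "separation c N f" "x \<in> Xtilde c N f" "is_itinerary c N f x \<theta>"
  shows "pcompl \<theta> n + card (Delta_lr c N f n x) \<le> pcompl \<theta> (n + 1) \<and>
         pcompl \<theta> (n + 1) \<le> pcompl \<theta> n + card (Disc c N) \<and>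
         ((\<forall>A \<in> atoms_x c N f n x. card (A \<inter> Disc c N) \<le> 1) \<longrightarrow>
            pcompl \<theta> (n + 1) = pcompl \<theta> n + card (Delta_lr c N f n x))"
proof -
  interpret O: orb c N lam f x \<theta> n
    using assms by (simp add: orb_def orb_axioms_def pcm_def)
  have lo: "pcompl \<theta> n + card (Delta_lr c N f n x) \<le> pcompl \<theta> (n + 1)"
    using O.lower O.sum_m1 O.pSn O.pn by simp
  show ?thesis using lo O.upper O.eqpart by (auto intro: antisym)
qed

theorem lemma5:
  fixes c :: "nat \<Rightarrow> real" and N :: nat and lam :: real and f :: "real \<Rightarrow> real"
    and x :: real and \<theta> :: "nat \<Rightarrow> nat"
  assumes "pc_map c N lam f"
    and "separation c N f"
    and "x \<in> Xtilde c N f"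
    and "is_itinerary c N f x \<theta>"
  shows "(\<forall>n \<ge> 1. pcompl \<theta> n + card (Delta_lr c N f n x) \<le> pcompl \<theta> (n + 1) \<and>
                   pcompl \<theta> (n + 1) \<le> pcompl \<theta> n + card (Disc c N))
    \<and> (\<forall>n0 \<ge> 1.
         (\<forall>n \<ge> n0. \<forall>A \<in> atoms_x c N f n x. card (A \<inter> Disc c N) \<le> 1) \<and>
         (\<forall>m \<ge> 1. (\<forall>n \<ge> m. \<forall>A \<in> atoms_x c N f n x. card (A \<inter> Disc c N) \<le> 1) \<longrightarrow> n0 \<le> m)
         \<longrightarrow> (\<forall>n \<ge> n0. pcompl \<theta> (n + 1) = pcompl \<theta> n + card (Delta_lr c N f n x)))"
  using orb_facts[OF assms] by blast

end
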